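(* In the RSP setting described in the context, let $b\in\mathbb{N}^+$ with $b\le n$, and let $i^*$ be the smallest integer $i\ge0$ with $C_{\mathrm{opt}}(G^-_{S_i})>b$. Then $i^*\le\lceil\log_2 n\rceil$.
   Context: RSP setting: $G=(V,E,c,r)$ is a weakly connected directed graph with $n=|V|$, $m=|E|$, $c,r:E\to\mathbb{R}_{\ge0}$, vertices $s\ne t$, bound $R\ge 0$. Paths are edge sets; $P_v$ = set of paths from $s$ to $v$; $C_G(p)=\sum_{e\in p}c(e)$, $R_G(p)=\sum_{e\in p}r(e)$; $C_{\mathrm{opt}}(G)=\min\{C_G(p):p\in P_t,\ R_G(p)\le R\}$. It is assumed that a path $p\in P_t$ with $R_G(p)\le R$ exists and that $C_{\mathrm{opt}}(G)>0$. For $S>0$, $G^-_S=(V,E,c^-_S,r)$ with $c^-_S(e)=\lfloor c(e)/S\rfloor$ (same $s,t,R$). Bounds $L,U$: sort the edges $e_1,\dots,e_m$ ascending by cost; let $j^*$ be the smallest $j$ such that some $p\in P_t$ with $R_G(p)\le R$ uses only edges from $\{e_1,\dots,e_j\}$; set $L=c(e_{j^*})$ and $U=nL$ (so $L\le C_{\mathrm{opt}}(G)\le U$). Scaling factors: $S_i=2^{-i}U/(2n)$ for $i\in\mathbb{N}_0$. *)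

theory Defs
  imports Complex_Main
begin

text \<open>A directed multigraph: vertex set V, edge set E of an abstract edge type,
  with tail function src and head function dst.\<close>

fun epath :: "('e \<Rightarrow> 'v) \<Rightarrow> ('e \<Rightarrow> 'v) \<Rightarrow> 'v \<Rightarrow> 'e list \<Rightarrow> 'v \<Rightarrow> bool" where
  "epath src dst u [] v = (u = v)"
| "epath src dst u (e # es) v = (src e = u \<and> epath src dst (dst e) es v)"

definition paths :: "'e set \<Rightarrow> ('e \<Rightarrow> 'v) \<Rightarrow> ('e \<Rightarrow> 'v) \<Rightarrow> 'v \<Rightarrow> 'v \<Rightarrow> 'e set set" where
  "paths E src dst s v =
     {set es | es. set es \<subseteq> E \<and> epath src dst s es v \<and> distinct (s # map dst es)}"

definition weakly_connected :: "'v set \<Rightarrow> 'e set \<Rightarrow> ('e \<Rightarrow> 'v) \<Rightarrow> ('e \<Rightarrow> 'v) \<Rightarrow> bool" where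
  "weakly_connected V E src dst \<longleftrightarrow>
     (\<forall>u\<in>V. \<forall>v\<in>V. (u, v) \<in> ({(src e, dst e) | e. e \<in> E} \<union> {(dst e, src e) | e. e \<in> E})\<^sup>*)"

definition feasible_paths ::
  "'e set \<Rightarrow> ('e \<Rightarrow> 'v) \<Rightarrow> ('e \<Rightarrow> 'v) \<Rightarrow> ('e \<Rightarrow> real) \<Rightarrow> 'v \<Rightarrow> 'v \<Rightarrow> real \<Rightarrow> 'e set set" where
  "feasible_paths E src dst r s t R = {p \<in> paths E src dst s t. (\<Sum>e\<in>p. r e) \<le> R}"

definition copt ::
  "'e set \<Rightarrow> ('e \<Rightarrow> 'v) \<Rightarrow> ('e \<Rightarrow> 'v) \<Rightarrow> ('e \<Rightarrow> real) \<Rightarrow> ('e \<Rightarrow> real) \<Rightarrow> 'v \<Rightarrow> 'v \<Rightarrow> real \<Rightarrow> real" where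
  "copt E src dst c r s t R = Min ((\<lambda>p. \<Sum>e\<in>p. c e) ` feasible_paths E src dst r s t R)"

definition scaled_cost :: "('e \<Rightarrow> real) \<Rightarrow> real \<Rightarrow> 'e \<Rightarrow> real" where
  "scaled_cost c S e = real_of_int \<lfloor>c e / S\<rfloor>"

text \<open>Lower bound L, given the edges listed ascending by cost as es = [e_1,...,e_m]
  (0-based in Isabelle: e_{j+1} = es ! j).\<close>
definition lower_bound ::
  "'e list \<Rightarrow> ('e \<Rightarrow> 'v) \<Rightarrow> ('e \<Rightarrow> 'v) \<Rightarrow> ('e \<Rightarrow> real) \<Rightarrow> ('e \<Rightarrow> real) \<Rightarrow> 'v \<Rightarrow> 'v \<Rightarrow> real \<Rightarrow> real" where
  "lower_bound es src dst c r s t R =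
     c (es ! (LEAST j. \<exists>p \<in> feasible_paths (set es) src dst r s t R. p \<subseteq> set (take (Suc j) es)))"

definition upper_bound ::
  "nat \<Rightarrow> 'e list \<Rightarrow> ('e \<Rightarrow> 'v) \<Rightarrow> ('e \<Rightarrow> 'v) \<Rightarrow> ('e \<Rightarrow> real) \<Rightarrow> ('e \<Rightarrow> real) \<Rightarrow> 'v \<Rightarrow> 'v \<Rightarrow> real \<Rightarrow> real" where
  "upper_bound n es src dst c r s t R = real n * lower_bound es src dst c r s t R"

definition scale_factor :: "nat \<Rightarrow> real \<Rightarrow> nat \<Rightarrow> real" where
  "scale_factor n U i = (1/2) ^ i * U / (2 * real n)"

end

theory Submission
  imports Defs
begin

lemma pow_ceil_log: assumes "n \<ge> (1::nat)" shows "real n \<le> 2 ^ nat \<lceil>log 2 (real n)\<rceil>"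
proof -
  have "log 2 (real n) \<ge> 0" using assms by simp
  have "real n = 2 powr (log 2 (real n))" using assms by simp
  also have "\<dots> \<le> 2 powr (real (nat \<lceil>log 2 (real n)\<rceil>))"
    by (intro powr_mono) (use \<open>log 2 (real n) \<ge> 0\<close> in linarith)+
  also have "\<dots> = 2 ^ nat \<lceil>log 2 (real n)\<rceil>" by (simp add: powr_realpow)
  finally show ?thesis .
qed

theorem lemma10:
  fixes V :: "'v set" and E :: "'e set" and src dst :: "'e \<Rightarrow> 'v"
    and c r :: "'e \<Rightarrow> real" and s t :: 'v and R :: real
    and es :: "'e list" and b :: nat
  assumes "finite V" and "finite E"
    and "\<forall>e\<in>E. src e \<in> V \<and> dst e \<in> V"
    and "weakly_connected V E src dst"
    and "s \<in> V" and "t \<in> V" and "s \<noteq> t"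
    and "\<forall>e\<in>E. c e \<ge> 0" and "\<forall>e\<in>E. r e \<ge> 0" and "R \<ge> 0"
    and "feasible_paths E src dst r s t R \<noteq> {}"
    and "copt E src dst c r s t R > 0"
    and "distinct es" and "set es = E" and "sorted (map c es)"
    and "1 \<le> b" and "b \<le> card V"
  shows "(\<exists>i. copt E src dst
                 (scaled_cost c (scale_factor (card V) (upper_bound (card V) es src dst c r s t R) i))
                 r s t R > real b)
       \<and> int (LEAST i. copt E src dst
                 (scaled_cost c (scale_factor (card V) (upper_bound (card V) es src dst c r s t R) i))
                 r s t R > real b) \<le> \<lceil>log 2 (real (card V))\<rceil>"
proof -
  define n where "n = card V"
  define F where "F = feasible_paths E src dst r s t R"
  define Q where "Q = (\<lambda>j. \<exists>p \<in> F. p \<subseteq> set (take (Suc j) es))"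
  define js where "js = (LEAST j. Q j)"
  define L where "L = lower_bound es src dst c r s t R"
  have L_def': "L = c (es ! js)" unfolding L_def lower_bound_def js_def Q_def F_def
    using assms(14) by simp
  have n1: "n \<ge> 1" using assms(16,17) n_def by simp
  have finF: "finite F"
  proof -
    have "F \<subseteq> Pow E" unfolding F_def feasible_paths_def paths_def by auto
    thus ?thesis using assms(2) finite_subset by blast
  qed
  have Fsub: "\<And>p. p \<in> F \<Longrightarrow> p \<subseteq> E \<and> p \<noteq> {}"
  proof -
    fix p assume "p \<in> F"
    then obtain xs where "p = set xs" "set xs \<subseteq> E" "epath src dst s xs t"
      unfolding F_def feasible_paths_def paths_def by auto
    moreover have "xs \<noteq> []" using \<open>epath src dst s xs t\<close> assms(7) by (cases xs) auto
    ultimately show "p \<subseteq> E \<and> p \<noteq> {}" by auto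
  qed
  obtain p0 where p0: "p0 \<in> F" using assms(11) F_def by auto
  have esne: "es \<noteq> []" using Fsub[OF p0] assms(14) by auto
  have Qm: "Q (length es - 1)" unfolding Q_def using p0 Fsub[OF p0] assms(14) esne by auto
  have jsle: "js \<le> length es - 1" unfolding js_def using Qm by (rule Least_le)
  hence jslt: "js < length es" using esne by (cases es) auto
  have Qjs: "Q js" unfolding js_def using Qm by (rule LeastI)
  have copt_def': "copt E src dst c r s t R = Min ((\<lambda>p. \<Sum>e\<in>p. c e) ` F)"
    unfolding copt_def F_def by simp
  have Lpos: "L > 0"
  proof -
    from Qjs obtain p where p: "p \<in> F" "p \<subseteq> set (take (Suc js) es)" unfolding Q_def by auto
    have "copt E src dst c r s t R \<le> (\<Sum>e\<in>p. c e)" unfolding copt_def'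
      using finF p by (intro Min_le) auto
    hence "(\<Sum>e\<in>p. c e) > 0" using assms(12) by linarith
    have "\<exists>e. e \<in> p \<and> c e > 0"
    proof (rule ccontr)
      assume "\<not> (\<exists>e. e \<in> p \<and> c e > 0)"
      hence "(\<Sum>e\<in>p. c e) \<le> 0" by (intro sum_nonpos) (auto simp: not_less)
      thus False using \<open>(\<Sum>e\<in>p. c e) > 0\<close> by linarith
    qed
    then obtain e where e: "e \<in> p" "c e > 0" by blast
    then obtain k where k: "k < length (take (Suc js) es)" "take (Suc js) es ! k = e"
      using p(2) by (metis in_set_conv_nth subsetD)
    have "k \<le> js" "k < length es" using k(1) by auto
    hence "c (es ! k) \<le> c (es ! js)"
      using sorted_nth_mono[OF assms(15), of k js] jslt by simp
    moreover have "es ! k = e" using k by simp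
    ultimately show ?thesis using e L_def' by simp
  qed
  have bigedge: "\<And>p. p \<in> F \<Longrightarrow> \<exists>e\<in>p. c e \<ge> L"
  proof (rule ccontr)
    fix p assume pF: "p \<in> F" and nb: "\<not> (\<exists>e\<in>p. c e \<ge> L)"
    have sub: "p \<subseteq> set (take js es)"
    proof
      fix e assume "e \<in> p"
      hence "e \<in> set es" "c e < L" using Fsub[OF pF] assms(14) nb by auto
      then obtain k where k: "k < length es" "es ! k = e" by (metis in_set_conv_nth)
      have "k < js"
      proof (rule ccontr)
        assume "\<not> k < js"
        hence "c (es ! js) \<le> c (es ! k)"
          using sorted_nth_mono[OF assms(15), of js k] k(1) by simp
        thus False using k \<open>c e < L\<close> L_def' by simp
      qed
      thus "e \<in> set (take js es)" using k by (metis in_set_conv_nth length_take min_less_iff_conj nth_take)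
    qed
    show False
    proof (cases js)
      case 0
      thus False using sub Fsub[OF pF] by auto
    next
      case (Suc j)
      have "Q j" unfolding Q_def using pF sub Suc by auto
      moreover have "j < js" using Suc by simp
      ultimately show False unfolding js_def using not_less_Least by blast
    qed
  qed
  define k where "k = nat \<lceil>log 2 (real n)\<rceil>"
  have nk: "real n \<le> 2 ^ k" unfolding k_def using pow_ceil_log[OF n1] .
  define U where "U = upper_bound n es src dst c r s t R"
  define S where "S = scale_factor n U k"
  have S_eq: "S = (1/2)^k * L / 2" unfolding S_def scale_factor_def U_def upper_bound_def L_def
    using n1 by (simp add: field_simps)
  have Spos: "S > 0" unfolding S_eq using Lpos by (intro divide_pos_pos mult_pos_pos) auto
  have LS: "L / S = 2 * 2^k"
  proof -
    have "S * (2 * 2^k) = L" using S_eq by (simp add: field_simps power_one_over)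
    thus ?thesis using Spos by (simp add: field_simps)
  qed
  have main: "copt E src dst (scaled_cost c S) r s t R > real b"
  proof -
    have "copt E src dst (scaled_cost c S) r s t R = Min ((\<lambda>p. \<Sum>e\<in>p. scaled_cost c S e) ` F)"
      unfolding copt_def F_def by simp
    also have "\<dots> > real b"
    proof (subst Min_gr_iff)
      show "finite ((\<lambda>p. \<Sum>e\<in>p. scaled_cost c S e) ` F)" using finF by simp
      show "(\<lambda>p. \<Sum>e\<in>p. scaled_cost c S e) ` F \<noteq> {}" using p0 by auto
      show "\<forall>a\<in>(\<lambda>p. \<Sum>e\<in>p. scaled_cost c S e) ` F. real b < a"
      proof
        fix a assume "a \<in> (\<lambda>p. \<Sum>e\<in>p. scaled_cost c S e) ` F"
        then obtain p where pF: "p \<in> F" and a: "a = (\<Sum>e\<in>p. scaled_cost c S e)" by auto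
        obtain e where e: "e \<in> p" "c e \<ge> L" using bigedge[OF pF] by auto
        have finp: "finite p" using Fsub[OF pF] assms(2) finite_subset by blast
        have nonneg: "\<And>x. x \<in> p \<Longrightarrow> scaled_cost c S x \<ge> 0"
          unfolding scaled_cost_def using Fsub[OF pF] assms(8) Spos by auto
        have "scaled_cost c S e \<le> a" unfolding a
          using member_le_sum[of e p "scaled_cost c S"] e(1) nonneg finp by auto
        have "c e / S \<ge> L / S" using e(2) Spos by (simp add: divide_right_mono)
        hence "c e / S \<ge> 2 * 2^k" using LS by simp
        hence "c e / S \<ge> real (2 * 2^k)" by simp
        hence "\<lfloor>c e / S\<rfloor> \<ge> int (2 * 2^k)" by (metis floor_of_nat le_floor_iff of_int_of_nat_eq)
        hence "scaled_cost c S e \<ge> 2 * 2^k" unfolding scaled_cost_def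
        proof -
          assume h: "int (2 * 2 ^ k) \<le> \<lfloor>c e / S\<rfloor>"
          have "real_of_int (int (2 * 2 ^ k)) \<le> real_of_int \<lfloor>c e / S\<rfloor>"
            using h by (simp only: of_int_le_iff)
          thus "2 * 2 ^ k \<le> real_of_int \<lfloor>c e / S\<rfloor>" by simp
        qed
        moreover have "real b < 2 * 2^k" using nk assms(17) n_def n1 by linarith
        ultimately show "real b < a" using \<open>scaled_cost c S e \<le> a\<close> by linarith
      qed
    qed
    finally show ?thesis .
  qed
  have ex: "\<exists>i. copt E src dst (scaled_cost c (scale_factor n U i)) r s t R > real b"
    using main S_def by blast
  have "(LEAST i. copt E src dst (scaled_cost c (scale_factor n U i)) r s t R > real b) \<le> k"
    using main S_def by (intro Least_le) simp
  hence "int (LEAST i. copt E src dst (scaled_cost c (scale_factor n U i)) r s t R > real b)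
           \<le> \<lceil>log 2 (real n)\<rceil>"
  proof -
    have "log 2 (real n) \<ge> 0" using n1 by simp
    hence "int k = \<lceil>log 2 (real n)\<rceil>" unfolding k_def by simp
    thus ?thesis using \<open>(LEAST i. _) \<le> k\<close> by linarith
  qed
  thus ?thesis using ex unfolding n_def U_def by simp
qed

end
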